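(* In the known-scale model of the context, suppose $k_n\sim n^a$ for some $0<a<1$, and let $0\le\delta<1-a$ be such that there exists, for each $n$, $\theta_{0n}=(\theta_{10n},\dots,\theta_{K(n)0n})$ with $\|f_{\theta_{0n}}-f_0\|_2=o(n^{-\delta})$ (A1). For $\kappa>0$ let $N_{\kappa/n^\delta}=\{\omega_n:\sigma_0^{-2}\int(f_{\theta_n}(\mathbf x)-f_0(\mathbf x))^2d\mathbf x<\kappa/n^\delta\}$. Then for every $\kappa>0$ and $\tilde\kappa>0$: 1. if $\sum_{i=1}^{K(n)}\theta_{i0n}^2=o(n^{1-\delta})$ (A2) and $p(\omega_n)=\prod_{i=1}^{K(n)}(2\pi\zeta^2)^{-1/2}e^{-\theta_{in}^2/(2\zeta^2)}$, then $\int_{N_{\kappa/n^\delta}}p(\omega_n)d\omega_n\ge e^{-\tilde\kappa n^{1-\delta}}$ for all sufficiently large $n$; 2. if $\sum_{i=1}^{K(n)}\theta_{i0n}^2=O(n^v)$ for some $v>1$ (A3) and $p(\omega_n)=\prod_{i=1}^{K(n)}(2\pi\zeta^2n^u)^{-1/2}e^{-\theta_{in}^2/(2\zeta^2n^u)}$ with $u>v$, then $\int_{N_{\kappa/n^\delta}}p(\omega_n)d\omega_n\ge e^{-\tilde\kappa n^{1-\delta}}$ for all sufficiently large $n$.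
   Context: $\sigma_0>0$ is a fixed known noise standard deviation; $f_0$ is a square-integrable function on $[0,1]^p$, $p$ fixed; $\|\cdot\|_2$ is the $L_2([0,1]^p)$ norm. $\psi(u)=1/(1+e^{-u})$, $f_{\theta_n}(\mathbf x)=\beta_0+\sum_{j=1}^{k_n}\beta_j\psi(\gamma_{j0}+\sum_{h=1}^p\gamma_{jh}x_h)$, $\omega_n=\theta_n=(\theta_{1n},\dots,\theta_{K(n)n})$ the vector of all network parameters, $K(n)$ its length. $\zeta>0$ is fixed. *)

theory Defs
  imports "HOL-Probability.Probability" "HOL-Library.Landau_Symbols"
begin

definition psi :: "real \<Rightarrow> real" where
  "psi u = 1 / (1 + exp (- u))"

definition nparams :: "nat \<Rightarrow> nat \<Rightarrow> nat" where
  "nparams p k = 1 + k * (p + 2)"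

text \<open>Parameter layout of theta : nat => real (indices 0 .. k(p+2)):
  beta_0 = theta 0, beta_j = theta j (1 <= j <= k),
  gamma_jh = theta (gidx p k j h) (1 <= j <= k, 0 <= h <= p).\<close>
definition gidx :: "nat \<Rightarrow> nat \<Rightarrow> nat \<Rightarrow> nat \<Rightarrow> nat" where
  "gidx p k j h = k + (j - 1) * (p + 1) + h + 1"

definition fnet :: "nat \<Rightarrow> nat \<Rightarrow> (nat \<Rightarrow> real) \<Rightarrow> (nat \<Rightarrow> real) \<Rightarrow> real" where
  "fnet p k \<theta> x = \<theta> 0 + (\<Sum>j\<in>{1..k}. \<theta> j *
      psi (\<theta> (gidx p k j 0) + (\<Sum>h\<in>{1..p}. \<theta> (gidx p k j h) * x h)))"

definition cube :: "nat \<Rightarrow> (nat \<Rightarrow> real) measure" where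
  "cube p = PiM {1..p} (\<lambda>_. lebesgue_on {0..1})"

definition L2sq :: "nat \<Rightarrow> ((nat \<Rightarrow> real) \<Rightarrow> real) \<Rightarrow> ((nat \<Rightarrow> real) \<Rightarrow> real) \<Rightarrow> real" where
  "L2sq p f g = integral\<^sup>L (cube p) (\<lambda>x. (f x - g x)\<^sup>2)"

definition L2dist :: "nat \<Rightarrow> ((nat \<Rightarrow> real) \<Rightarrow> real) \<Rightarrow> ((nat \<Rightarrow> real) \<Rightarrow> real) \<Rightarrow> real" where
  "L2dist p f g = sqrt (L2sq p f g)"

definition parspace :: "nat \<Rightarrow> (nat \<Rightarrow> real) measure" where
  "parspace K = PiM {..<K} (\<lambda>_. lborel)"

text \<open>The neighbourhood N_{kappa/n^delta} (kappa here is the full radius eps = kappa/n^delta).\<close>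
definition Nbhd :: "nat \<Rightarrow> nat \<Rightarrow> real \<Rightarrow> ((nat \<Rightarrow> real) \<Rightarrow> real) \<Rightarrow> real \<Rightarrow> (nat \<Rightarrow> real) set" where
  "Nbhd p k \<sigma>0 f0 \<epsilon> = {\<omega> \<in> space (parspace (nparams p k)).
       L2sq p (fnet p k \<omega>) f0 / \<sigma>0\<^sup>2 < \<epsilon>}"

definition gprior :: "real \<Rightarrow> nat \<Rightarrow> (nat \<Rightarrow> real) \<Rightarrow> real" where
  "gprior s2 K \<omega> = (\<Prod>i<K. (2 * pi * s2) powr (-1/2) * exp (- (\<omega> i)\<^sup>2 / (2 * s2)))"

definition prior_mass :: "real \<Rightarrow> nat \<Rightarrow> (nat \<Rightarrow> real) set \<Rightarrow> ennreal" where
  "prior_mass s2 K N = (\<integral>\<^sup>+ \<omega>. ennreal (gprior s2 K \<omega>) * indicator N \<omega> \<partial>parspace K)"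

end

theory Submission imports Defs "HOL-Real_Asymp.Real_Asymp" begin


lemma box_mass:
  fixes \<theta> :: "nat \<Rightarrow> real"
  assumes eta: "\<eta> > 0" and s2: "s2 > 0"
    and sub: "(\<Pi>\<^sub>E i\<in>{..<K}. {\<theta> i - \<eta> .. \<theta> i + \<eta>}) \<subseteq> N"
  shows "ennreal ((\<Prod>i<K. (2 * pi * s2) powr (-1/2) * exp (- (\<bar>\<theta> i\<bar> + \<eta>)\<^sup>2 / (2 * s2))) * (2 * \<eta>) ^ K)
         \<le> prior_mass s2 K N"
proof -
  define B where "B = (\<Pi>\<^sub>E i\<in>{..<K}. {\<theta> i - \<eta> .. \<theta> i + \<eta>})"
  define c where "c = (\<Prod>i<K. (2 * pi * s2) powr (-1/2) * exp (- (\<bar>\<theta> i\<bar> + \<eta>)\<^sup>2 / (2 * s2)))"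
  have c0: "c \<ge> 0" unfolding c_def by (intro prod_nonneg) auto
  interpret product_sigma_finite "\<lambda>_. lborel :: real measure"
    by (simp add: product_sigma_finite_def sigma_finite_lborel)
  have Bm: "B \<in> sets (parspace K)" unfolding B_def parspace_def
    by (intro sets_PiM_I_finite) auto
  have eB: "emeasure (parspace K) B = ennreal ((2 * \<eta>) ^ K)"
  proof -
    have "emeasure (parspace K) B = (\<Prod>i<K. ennreal (2 * \<eta>))"
      unfolding B_def parspace_def by (subst emeasure_PiM) (use eta in auto)
    also have "\<dots> = ennreal (2 * \<eta>) ^ K" by simp
    also have "\<dots> = ennreal ((2 * \<eta>) ^ K)" by (rule ennreal_power) (use eta in simp)
    finally show ?thesis .
  qed
  have "ennreal (c * (2 * \<eta>) ^ K) = ennreal c * emeasure (parspace K) B"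
    using eB eta c0 by (simp add: ennreal_mult)
  also have "\<dots> = (\<integral>\<^sup>+ \<omega>. ennreal c * indicator B \<omega> \<partial>parspace K)"
    using Bm by (simp add: nn_integral_cmult_indicator)
  also have "\<dots> \<le> prior_mass s2 K N" unfolding prior_mass_def
  proof (intro nn_integral_mono)
    fix \<omega> assume "\<omega> \<in> space (parspace K)"
    show "ennreal c * indicator B \<omega> \<le> ennreal (gprior s2 K \<omega>) * indicator N \<omega>"
    proof (cases "\<omega> \<in> B")
      case True
      then have "\<omega> \<in> N" using sub B_def by auto
      have "c \<le> gprior s2 K \<omega>" unfolding c_def gprior_def
      proof (intro prod_mono conjI)
        fix i assume i: "i \<in> {..<K}"
        then have "\<omega> i \<in> {\<theta> i - \<eta> .. \<theta> i + \<eta>}" using True unfolding B_def by (auto simp: PiE_iff)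
        then have "\<bar>\<omega> i - \<theta> i\<bar> \<le> \<eta>" by (simp add: abs_le_iff)
        then have "\<bar>\<omega> i\<bar> \<le> \<bar>\<theta> i\<bar> + \<eta>" by linarith
        then have "(\<omega> i)\<^sup>2 \<le> (\<bar>\<theta> i\<bar> + \<eta>)\<^sup>2"
          by (metis abs_ge_zero power2_abs power_mono)
        then have "- (\<bar>\<theta> i\<bar> + \<eta>)\<^sup>2 / (2 * s2) \<le> - (\<omega> i)\<^sup>2 / (2 * s2)"
          using s2 by (intro divide_right_mono) auto
        then show "(2 * pi * s2) powr (-1/2) * exp (- (\<bar>\<theta> i\<bar> + \<eta>)\<^sup>2 / (2 * s2))
          \<le> (2 * pi * s2) powr (-1/2) * exp (- (\<omega> i)\<^sup>2 / (2 * s2))"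
          by (intro mult_left_mono) auto
      qed auto
      then show ?thesis using True \<open>\<omega> \<in> N\<close> by (simp add: ennreal_leI)
    qed simp
  qed
  finally show ?thesis unfolding c_def B_def using sub by simp
qed


lemma psi_bounds: "0 \<le> psi u" "psi u \<le> 1"
  unfolding psi_def by (auto simp: divide_simps add_pos_nonneg)

lemma psi_deriv: "(psi has_real_derivative exp (- u) / (1 + exp (- u))\<^sup>2) (at u)"
proof -
  have pos: "1 + exp (- u) \<noteq> 0" using exp_gt_zero[of "-u"] by linarith
  show ?thesis unfolding psi_def
    by (auto intro!: derivative_eq_intros simp: pos power2_eq_square)
qed

lemma psi_lip: "\<bar>psi a - psi b\<bar> \<le> \<bar>a - b\<bar>"
proof -
  have d: "\<bar>exp (- u) / (1 + exp (- u))\<^sup>2\<bar> \<le> 1" for u :: real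
  proof -
    have "exp (- u) \<le> (1 + exp (- u))\<^sup>2" using exp_gt_zero[of "-u"]
      by (simp add: power2_eq_square algebra_simps)
    then show ?thesis by (simp add: divide_le_eq_1)
  qed
  show ?thesis
  proof (cases "a = b")
    case False
    then consider "a < b" | "b < a" by linarith
    then show ?thesis
    proof cases
      case 1
      from MVT2[OF 1, of psi "\<lambda>u. exp (- u) / (1 + exp (- u))\<^sup>2"] psi_deriv
      obtain z where "psi b - psi a = (b - a) * (exp (- z) / (1 + exp (- z))\<^sup>2)" by blast
      then have "\<bar>psi b - psi a\<bar> = \<bar>b - a\<bar> * \<bar>exp (- z) / (1 + exp (- z))\<^sup>2\<bar>" by (simp add: abs_mult)
      also have "\<dots> \<le> \<bar>b - a\<bar>" by (rule mult_left_le[OF d[of z]]) simp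
      finally show ?thesis by linarith
    next
      case 2
      from MVT2[OF 2, of psi "\<lambda>u. exp (- u) / (1 + exp (- u))\<^sup>2"] psi_deriv
      obtain z where "psi a - psi b = (a - b) * (exp (- z) / (1 + exp (- z))\<^sup>2)" by blast
      then have "\<bar>psi a - psi b\<bar> = \<bar>a - b\<bar> * \<bar>exp (- z) / (1 + exp (- z))\<^sup>2\<bar>" by (simp add: abs_mult)
      also have "\<dots> \<le> \<bar>a - b\<bar>" by (rule mult_left_le[OF d[of z]]) simp
      finally show ?thesis .
    qed
  qed simp
qed

lemma gidx_lt: "j \<in> {1..k} \<Longrightarrow> h \<le> p \<Longrightarrow> gidx p k j h < nparams p k"
proof -
  assume j: "j \<in> {1..k}" and h: "h \<le> p"
  have "(j - 1) * (p + 1) + h + 1 \<le> (j - 1) * (p + 1) + (p + 1)" using h by simp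
  also have "\<dots> = j * (p + 1)" using j by (cases j) auto
  also have "\<dots> \<le> k * (p + 1)" using j by (intro mult_le_mono1) simp
  finally show ?thesis unfolding gidx_def nparams_def by (simp add: algebra_simps)
qed

lemma fnet_diff:
  fixes \<omega> \<theta> x :: "nat \<Rightarrow> real"
  assumes close: "\<And>i. i < nparams p k \<Longrightarrow> \<bar>\<omega> i - \<theta> i\<bar> \<le> \<eta>"
    and M: "\<And>i. i < nparams p k \<Longrightarrow> \<bar>\<theta> i\<bar> \<le> M"
    and x: "\<And>h. h \<in> {1..p} \<Longrightarrow> \<bar>x h\<bar> \<le> 1"
  shows "\<bar>fnet p k \<omega> x - fnet p k \<theta> x\<bar> \<le> \<eta> * (1 + real k * (1 + M * (real p + 1)))"
proof -
  have eta0: "0 \<le> \<eta>" using close[of 0] by (simp add: nparams_def)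
  have M0: "0 \<le> M" using M[of 0] by (simp add: nparams_def)
  define A where "A j = \<omega> (gidx p k j 0) + (\<Sum>h\<in>{1..p}. \<omega> (gidx p k j h) * x h)" for j
  define B where "B j = \<theta> (gidx p k j 0) + (\<Sum>h\<in>{1..p}. \<theta> (gidx p k j h) * x h)" for j
  have AB: "\<bar>A j - B j\<bar> \<le> (real p + 1) * \<eta>" if j: "j \<in> {1..k}" for j
  proof -
    have "A j - B j = (\<omega> (gidx p k j 0) - \<theta> (gidx p k j 0)) +
        (\<Sum>h\<in>{1..p}. (\<omega> (gidx p k j h) - \<theta> (gidx p k j h)) * x h)"
      unfolding A_def B_def by (simp add: sum_subtractf algebra_simps)
    also have "\<bar>\<dots>\<bar> \<le> \<bar>\<omega> (gidx p k j 0) - \<theta> (gidx p k j 0)\<bar> +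
        (\<Sum>h\<in>{1..p}. \<bar>(\<omega> (gidx p k j h) - \<theta> (gidx p k j h)) * x h\<bar>)"
      by (rule order_trans[OF abs_triangle_ineq add_left_mono[OF sum_abs]])
    also have "\<dots> \<le> \<eta> + (\<Sum>h\<in>{1..p}. \<eta>)"
    proof (intro add_mono sum_mono)
      show "\<bar>\<omega> (gidx p k j 0) - \<theta> (gidx p k j 0)\<bar> \<le> \<eta>" using close gidx_lt[OF j, of 0] by simp
    next
      fix h assume h: "h \<in> {1..p}"
      have "\<bar>\<omega> (gidx p k j h) - \<theta> (gidx p k j h)\<bar> \<le> \<eta>" using close gidx_lt[OF j, of h] h by simp
      moreover have "\<bar>x h\<bar> \<le> 1" using x h by simp
      ultimately show "\<bar>(\<omega> (gidx p k j h) - \<theta> (gidx p k j h)) * x h\<bar> \<le> \<eta>"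
        unfolding abs_mult using eta0 by (metis abs_ge_zero mult_mono mult.right_neutral)
    qed
    finally show ?thesis by (simp add: algebra_simps)
  qed
  have tm: "\<bar>\<omega> j * psi (A j) - \<theta> j * psi (B j)\<bar> \<le> \<eta> + M * ((real p + 1) * \<eta>)" if j: "j \<in> {1..k}" for j
  proof -
    have jl: "j < nparams p k" using j by (auto simp: nparams_def)
    have "\<omega> j * psi (A j) - \<theta> j * psi (B j) = (\<omega> j - \<theta> j) * psi (A j) + \<theta> j * (psi (A j) - psi (B j))"
      by (simp add: algebra_simps)
    also have "\<bar>\<dots>\<bar> \<le> \<bar>\<omega> j - \<theta> j\<bar> * \<bar>psi (A j)\<bar> + \<bar>\<theta> j\<bar> * \<bar>psi (A j) - psi (B j)\<bar>"
      by (metis abs_mult abs_triangle_ineq)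
    also have "\<dots> \<le> \<eta> * 1 + M * ((real p + 1) * \<eta>)"
    proof (intro add_mono mult_mono)
      show "\<bar>\<omega> j - \<theta> j\<bar> \<le> \<eta>" using close jl by simp
      show "\<bar>psi (A j)\<bar> \<le> 1" using psi_bounds[of "A j"] by simp
      show "\<bar>\<theta> j\<bar> \<le> M" using M jl by simp
      show "\<bar>psi (A j) - psi (B j)\<bar> \<le> (real p + 1) * \<eta>" using psi_lip[of "A j" "B j"] AB[OF j] by linarith
    qed (use eta0 M0 in auto)
    finally show ?thesis by simp
  qed
  have "fnet p k \<omega> x - fnet p k \<theta> x = (\<omega> 0 - \<theta> 0) + (\<Sum>j\<in>{1..k}. \<omega> j * psi (A j) - \<theta> j * psi (B j))"
    unfolding fnet_def A_def B_def by (simp add: sum_subtractf)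
  also have "\<bar>\<dots>\<bar> \<le> \<bar>\<omega> 0 - \<theta> 0\<bar> + (\<Sum>j\<in>{1..k}. \<bar>\<omega> j * psi (A j) - \<theta> j * psi (B j)\<bar>)"
    by (rule order_trans[OF abs_triangle_ineq add_left_mono[OF sum_abs]])
  also have "\<dots> \<le> \<eta> + (\<Sum>j\<in>{1..k}. \<eta> + M * ((real p + 1) * \<eta>))"
    by (intro add_mono sum_mono tm) (use close[of 0] in \<open>auto simp: nparams_def\<close>)
  also have "\<dots> = \<eta> * (1 + real k * (1 + M * (real p + 1)))" by (simp add: algebra_simps)
  finally show ?thesis .
qed


lemma comp_meas:
  assumes h: "h \<in> {1..p}"
  shows "(\<lambda>x::nat\<Rightarrow>real. x h) \<in> borel_measurable (cube p)"
proof -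
  have "(\<lambda>x::nat\<Rightarrow>real. x h) \<in> measurable (PiM {1..p} (\<lambda>_. lebesgue_on {0..1})) (lebesgue_on {0..1})"
    by (rule measurable_component_singleton) (use h in simp)
  from measurable_compose[OF this id_borel_measurable_lebesgue_on]
  show ?thesis unfolding cube_def by (simp add: id_def)
qed

lemma psi_meas: "f \<in> borel_measurable M \<Longrightarrow> (\<lambda>x. psi (f x)) \<in> borel_measurable M"
  unfolding psi_def by measurable

lemma fnet_meas: "fnet p k \<theta> \<in> borel_measurable (cube p)"
  unfolding fnet_def
  by (intro borel_measurable_add borel_measurable_sum borel_measurable_times borel_measurable_const
      psi_meas comp_meas ballI) auto

lemma prob_cube: "prob_space (cube p)"
  unfolding cube_def
proof (intro prob_space_PiM prob_spaceI)
  show "emeasure (lebesgue_on {0..1}) (space (lebesgue_on {0..1::real})) = 1"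
    by (simp add: emeasure_restrict_space)
qed

lemma cube_space: "x \<in> space (cube p) \<Longrightarrow> h \<in> {1..p} \<Longrightarrow> \<bar>x h\<bar> \<le> 1"
  unfolding cube_def by (auto simp: space_PiM PiE_iff)


lemma sq_diff_le: "((a::real) - b)\<^sup>2 \<le> 2 * a\<^sup>2 + 2 * b\<^sup>2"
proof -
  have "2 * a\<^sup>2 + 2 * b\<^sup>2 - (a - b)\<^sup>2 = (a + b)\<^sup>2" by (simp add: power2_eq_square algebra_simps)
  moreover have "0 \<le> (a + b)\<^sup>2" by simp
  ultimately show ?thesis by linarith
qed

lemma sq_sum_le: "((a::real) + b)\<^sup>2 \<le> 2 * a\<^sup>2 + 2 * b\<^sup>2"
  using sq_diff_le[of a "-b"] by simp

lemma fnet_bound: "\<bar>fnet p k \<theta> x\<bar> \<le> \<bar>\<theta> 0\<bar> + (\<Sum>j\<in>{1..k}. \<bar>\<theta> j\<bar>)"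
proof -
  have "\<bar>fnet p k \<theta> x\<bar> \<le> \<bar>\<theta> 0\<bar> + (\<Sum>j\<in>{1..k}. \<bar>\<theta> j * psi (\<theta> (gidx p k j 0) + (\<Sum>h\<in>{1..p}. \<theta> (gidx p k j h) * x h))\<bar>)"
    unfolding fnet_def by (rule order_trans[OF abs_triangle_ineq add_left_mono[OF sum_abs]])
  also have "\<dots> \<le> \<bar>\<theta> 0\<bar> + (\<Sum>j\<in>{1..k}. \<bar>\<theta> j\<bar>)"
  proof (intro add_left_mono sum_mono)
    fix j
    show "\<bar>\<theta> j * psi (\<theta> (gidx p k j 0) + (\<Sum>h\<in>{1..p}. \<theta> (gidx p k j h) * x h))\<bar> \<le> \<bar>\<theta> j\<bar>"
      unfolding abs_mult using psi_bounds by (intro mult_left_le) auto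
  qed
  finally show ?thesis .
qed

lemma sq_integrable:
  assumes f0_meas: "f0 \<in> borel_measurable (cube p)"
    and f0_sq: "integrable (cube p) (\<lambda>x. (f0 x)\<^sup>2)"
  shows "integrable (cube p) (\<lambda>x. (fnet p k \<theta> x - f0 x)\<^sup>2)"
proof -
  interpret prob_space "cube p" by (rule prob_cube)
  define c where "c = \<bar>\<theta> 0\<bar> + (\<Sum>j\<in>{1..k}. \<bar>\<theta> j\<bar>)"
  have "integrable (cube p) (\<lambda>x. 2 * c\<^sup>2 + 2 * (f0 x)\<^sup>2)"
    using f0_sq by auto
  then show ?thesis
  proof (rule Bochner_Integration.integrable_bound)
    show "(\<lambda>x. (fnet p k \<theta> x - f0 x)\<^sup>2) \<in> borel_measurable (cube p)"
      using fnet_meas f0_meas by measurable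
    show "AE x in cube p. norm ((fnet p k \<theta> x - f0 x)\<^sup>2) \<le> norm (2 * c\<^sup>2 + 2 * (f0 x)\<^sup>2)"
    proof (intro AE_I2)
      fix x
      have b: "\<bar>fnet p k \<theta> x\<bar> \<le> c" unfolding c_def by (rule fnet_bound)
      then have "(fnet p k \<theta> x)\<^sup>2 \<le> c\<^sup>2"
        by (metis abs_ge_zero power2_abs power_mono)
      moreover have "(fnet p k \<theta> x - f0 x)\<^sup>2 \<le> 2 * (fnet p k \<theta> x)\<^sup>2 + 2 * (f0 x)\<^sup>2"
        by (rule sq_diff_le)
      ultimately show "norm ((fnet p k \<theta> x - f0 x)\<^sup>2) \<le> norm (2 * c\<^sup>2 + 2 * (f0 x)\<^sup>2)"
        by simp
    qed
  qed
qed

lemma box_in_Nbhd: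
  fixes \<theta> :: "nat \<Rightarrow> real"
  assumes f0_meas: "f0 \<in> borel_measurable (cube p)"
    and f0_sq: "integrable (cube p) (\<lambda>x. (f0 x)\<^sup>2)"
    and sigma0: "\<sigma>0 > 0"
    and M: "\<And>i. i < nparams p k \<Longrightarrow> \<bar>\<theta> i\<bar> \<le> M"
    and eta: "\<eta> \<ge> 0"
    and small: "2 * (\<eta> * (1 + real k * (1 + M * (real p + 1))))\<^sup>2 + 2 * L2sq p (fnet p k \<theta>) f0 < \<epsilon> * \<sigma>0\<^sup>2"
  shows "(\<Pi>\<^sub>E i\<in>{..<nparams p k}. {\<theta> i - \<eta> .. \<theta> i + \<eta>}) \<subseteq> Nbhd p k \<sigma>0 f0 \<epsilon>"
proof
  interpret prob_space "cube p" by (rule prob_cube)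
  define D where "D = \<eta> * (1 + real k * (1 + M * (real p + 1)))"
  fix \<omega> assume \<omega>: "\<omega> \<in> (\<Pi>\<^sub>E i\<in>{..<nparams p k}. {\<theta> i - \<eta> .. \<theta> i + \<eta>})"
  have sp: "\<omega> \<in> space (parspace (nparams p k))"
    using \<omega> unfolding parspace_def by (auto simp: space_PiM PiE_iff)
  have close: "\<bar>\<omega> i - \<theta> i\<bar> \<le> \<eta>" if "i < nparams p k" for i
  proof -
    have "\<omega> i \<in> {\<theta> i - \<eta> .. \<theta> i + \<eta>}" using \<omega> that by (auto simp: PiE_iff)
    then show ?thesis by (simp add: abs_le_iff)
  qed
  have int\<theta>: "integrable (cube p) (\<lambda>x. (fnet p k \<theta> x - f0 x)\<^sup>2)"
    by (rule sq_integrable[OF f0_meas f0_sq])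
  have "L2sq p (fnet p k \<omega>) f0 \<le> (\<integral>x. 2 * D\<^sup>2 + 2 * (fnet p k \<theta> x - f0 x)\<^sup>2 \<partial>cube p)"
    unfolding L2sq_def
  proof (rule integral_mono')
    show "integrable (cube p) (\<lambda>x. 2 * D\<^sup>2 + 2 * (fnet p k \<theta> x - f0 x)\<^sup>2)"
      using int\<theta> by auto
  next
    fix x assume x: "x \<in> space (cube p)"
    show "0 \<le> 2 * D\<^sup>2 + 2 * (fnet p k \<theta> x - f0 x)\<^sup>2" by simp
    have "\<bar>fnet p k \<omega> x - fnet p k \<theta> x\<bar> \<le> D"
      unfolding D_def by (rule fnet_diff[OF close M cube_space[OF x]]) auto
    then have "(fnet p k \<omega> x - fnet p k \<theta> x)\<^sup>2 \<le> D\<^sup>2"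
      by (metis abs_ge_zero power2_abs power_mono)
    moreover have "(fnet p k \<omega> x - f0 x)\<^sup>2 \<le> 2 * (fnet p k \<omega> x - fnet p k \<theta> x)\<^sup>2 + 2 * (fnet p k \<theta> x - f0 x)\<^sup>2"
      using sq_sum_le[of "fnet p k \<omega> x - fnet p k \<theta> x" "fnet p k \<theta> x - f0 x"] by simp
    ultimately show "(fnet p k \<omega> x - f0 x)\<^sup>2 \<le> 2 * D\<^sup>2 + 2 * (fnet p k \<theta> x - f0 x)\<^sup>2"
      by linarith
  qed
  also have "\<dots> = 2 * D\<^sup>2 + 2 * L2sq p (fnet p k \<theta>) f0"
    unfolding L2sq_def using int\<theta> by (simp add: prob_space)
  finally have "L2sq p (fnet p k \<omega>) f0 < \<epsilon> * \<sigma>0\<^sup>2" using small unfolding D_def by linarith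
  then have "L2sq p (fnet p k \<omega>) f0 / \<sigma>0\<^sup>2 < \<epsilon>" using sigma0 by (simp add: divide_less_eq)
  then show "\<omega> \<in> Nbhd p k \<sigma>0 f0 \<epsilon>" unfolding Nbhd_def using sp by simp
qed


lemma mass_lower:
  fixes \<theta> :: "nat \<Rightarrow> real"
  assumes f0_meas: "f0 \<in> borel_measurable (cube p)"
    and f0_sq: "integrable (cube p) (\<lambda>x. (f0 x)\<^sup>2)"
    and sigma0: "\<sigma>0 > 0" and s2: "s2 > 0" and eta: "\<eta> > 0"
    and small: "2 * (\<eta> * (1 + real k * (1 + (1 + (\<Sum>i<nparams p k. (\<theta> i)\<^sup>2)) * (real p + 1))))\<^sup>2
                + 2 * L2sq p (fnet p k \<theta>) f0 < \<epsilon> * \<sigma>0\<^sup>2"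
    and X: "(2 * (\<Sum>i<nparams p k. (\<theta> i)\<^sup>2) + 2 * real (nparams p k) * \<eta>\<^sup>2) / (2 * s2)
            + real (nparams p k) * ln (sqrt (2 * pi * s2) / (2 * \<eta>)) \<le> X"
  shows "ennreal (exp (- X)) \<le> prior_mass s2 (nparams p k) (Nbhd p k \<sigma>0 f0 \<epsilon>)"
proof -
  define K where "K = nparams p k"
  define S where "S = (\<Sum>i<K. (\<theta> i)\<^sup>2)"
  have M: "\<bar>\<theta> i\<bar> \<le> 1 + S" if "i < nparams p k" for i
  proof -
    have "\<bar>\<theta> i\<bar> \<le> 1 + (\<theta> i)\<^sup>2"
    proof (cases "\<bar>\<theta> i\<bar> \<le> 1")
      case True then show ?thesis using zero_le_power2[of "\<theta> i"] by linarith
    next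
      case False
      then have "\<bar>\<theta> i\<bar> * 1 \<le> \<bar>\<theta> i\<bar> * \<bar>\<theta> i\<bar>" by (intro mult_left_mono) auto
      then show ?thesis by (simp add: power2_eq_square)
    qed
    also have "(\<theta> i)\<^sup>2 \<le> S" unfolding S_def
      using that K_def by (intro member_le_sum) auto
    finally show ?thesis by simp
  qed
  have sub: "(\<Pi>\<^sub>E i\<in>{..<K}. {\<theta> i - \<eta> .. \<theta> i + \<eta>}) \<subseteq> Nbhd p k \<sigma>0 f0 \<epsilon>"
    unfolding K_def by (rule box_in_Nbhd[OF f0_meas f0_sq sigma0 M]) (use eta small S_def K_def in auto)
  note bm = box_mass[OF eta s2 sub]
  define Q where "Q = (\<Sum>i<K. (\<bar>\<theta> i\<bar> + \<eta>)\<^sup>2)"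
  have Q: "Q \<le> 2 * S + 2 * real K * \<eta>\<^sup>2"
  proof -
    have "Q \<le> (\<Sum>i<K. 2 * (\<theta> i)\<^sup>2 + 2 * \<eta>\<^sup>2)"
      unfolding Q_def
    proof (intro sum_mono)
      fix i show "(\<bar>\<theta> i\<bar> + \<eta>)\<^sup>2 \<le> 2 * (\<theta> i)\<^sup>2 + 2 * \<eta>\<^sup>2"
        using sq_sum_le[of "\<bar>\<theta> i\<bar>" \<eta>] by simp
    qed
    also have "\<dots> = 2 * S + 2 * real K * \<eta>\<^sup>2" unfolding S_def by (simp add: sum.distrib sum_distrib_left)
    finally show ?thesis .
  qed
  have sq: "sqrt (2 * pi * s2) > 0" using s2 by simp
  have pw: "(2 * pi * s2) powr (-1/2) = 1 / sqrt (2 * pi * s2)"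
  proof -
    have "(2 * pi * s2) powr (-1/2) = (2 * pi * s2) powr (- (1/2))" by simp
    also have "\<dots> = 1 / (2 * pi * s2) powr (1/2)" by (rule powr_minus_divide)
    also have "\<dots> = 1 / sqrt (2 * pi * s2)" using s2 by (simp add: powr_half_sqrt)
    finally show ?thesis .
  qed
  have "(\<Prod>i<K. (2 * pi * s2) powr (-1/2) * exp (- (\<bar>\<theta> i\<bar> + \<eta>)\<^sup>2 / (2 * s2))) * (2 * \<eta>) ^ K
      = exp (- Q / (2 * s2)) * (2 * \<eta> / sqrt (2 * pi * s2)) ^ K"
  proof -
    have "(\<Prod>i<K. (2 * pi * s2) powr (-1/2) * exp (- (\<bar>\<theta> i\<bar> + \<eta>)\<^sup>2 / (2 * s2)))
        = (1 / sqrt (2 * pi * s2)) ^ K * (\<Prod>i<K. exp (- (\<bar>\<theta> i\<bar> + \<eta>)\<^sup>2 / (2 * s2)))"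
      by (simp only: pw prod.distrib prod_constant card_lessThan)
    also have "(\<Prod>i<K. exp (- (\<bar>\<theta> i\<bar> + \<eta>)\<^sup>2 / (2 * s2))) = exp (\<Sum>i<K. - (\<bar>\<theta> i\<bar> + \<eta>)\<^sup>2 / (2 * s2))"
      by (simp add: exp_sum)
    also have "(\<Sum>i<K. - (\<bar>\<theta> i\<bar> + \<eta>)\<^sup>2 / (2 * s2)) = - Q / (2 * s2)"
      unfolding Q_def by (simp add: sum_negf sum_divide_distrib)
    finally show ?thesis by (simp add: power_divide)
  qed
  also have "(2 * \<eta> / sqrt (2 * pi * s2)) ^ K = exp (real K * ln (2 * \<eta> / sqrt (2 * pi * s2)))"
    using eta sq by (simp add: exp_of_nat_mult)
  also have "exp (- Q / (2 * s2)) * \<dots> = exp (- (Q / (2 * s2) + real K * ln (sqrt (2 * pi * s2) / (2 * \<eta>))))"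
    using eta sq by (simp add: exp_add[symmetric] ln_div algebra_simps)
  finally have eq: "(\<Prod>i<K. (2 * pi * s2) powr (-1/2) * exp (- (\<bar>\<theta> i\<bar> + \<eta>)\<^sup>2 / (2 * s2))) * (2 * \<eta>) ^ K
      = exp (- (Q / (2 * s2) + real K * ln (sqrt (2 * pi * s2) / (2 * \<eta>))))" .
  have "Q / (2 * s2) \<le> (2 * S + 2 * real K * \<eta>\<^sup>2) / (2 * s2)"
    using Q s2 by (intro divide_right_mono) auto
  then have "exp (- X) \<le> exp (- (Q / (2 * s2) + real K * ln (sqrt (2 * pi * s2) / (2 * \<eta>))))"
    using X unfolding K_def S_def by simp
  then have "ennreal (exp (- X)) \<le> ennreal ((\<Prod>i<K. (2 * pi * s2) powr (-1/2) * exp (- (\<bar>\<theta> i\<bar> + \<eta>)\<^sup>2 / (2 * s2))) * (2 * \<eta>) ^ K)"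
    unfolding eq by (rule ennreal_leI)
  also note bm
  finally show ?thesis unfolding K_def .
qed


lemma lhs_bound:
  fixes n :: nat and s2 r0 c1 a \<delta> S Sb :: real and k p K :: nat
  assumes n: "n \<ge> 1" and s2: "s2 > 0" and r0: "r0 > 0" and d: "\<delta> \<ge> 0"
    and kb: "real k \<le> c1 * real n powr a"
    and S0: "S \<ge> 0" and Sb: "S \<le> Sb"
    and K: "K = 1 + k * (p + 2)"
  defines "C \<equiv> 1 + real k * (1 + (1 + S) * (real p + 1))"
  defines "\<eta> \<equiv> r0 * real n powr (- \<delta> / 2) / C"
  shows "(2 * S + 2 * real K * \<eta>\<^sup>2) / (2 * s2) + real K * ln (sqrt (2 * pi * s2) / (2 * \<eta>))
     \<le> S / s2 + (1 + c1 * real n powr a * (real p + 2)) * r0\<^sup>2 / s2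
        + (1 + c1 * real n powr a * (real p + 2)) *
          (\<bar>ln (sqrt (2 * pi * s2))\<bar> + \<bar>ln (2 * r0)\<bar> + \<delta> / 2 * ln (real n)
           + ln (1 + c1 * real n powr a * (1 + (1 + Sb) * (real p + 1))))"
proof -
  define Kb where "Kb = 1 + c1 * real n powr a * (real p + 2)"
  define Cb where "Cb = 1 + c1 * real n powr a * (1 + (1 + Sb) * (real p + 1))"
  have C1: "C \<ge> 1" unfolding C_def using S0 by (simp add: add_nonneg_nonneg)
  have np: "real n > 0" using n by simp
  have npw: "real n powr (- \<delta> / 2) \<le> 1"
  proof -
    have "real n powr (- \<delta> / 2) \<le> real n powr 0" by (rule powr_mono) (use n d in auto)
    then show ?thesis using np by simp
  qed
  have npw0: "real n powr (- \<delta> / 2) > 0" using np by simp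
  have eta0: "\<eta> > 0" unfolding \<eta>_def using r0 npw0 C1 by simp
  have etar: "\<eta> \<le> r0" unfolding \<eta>_def using r0 npw C1 npw0
    by (simp add: divide_le_eq)
  have KKb: "real K \<le> Kb"
  proof -
    have "real k * (real p + 2) \<le> c1 * real n powr a * (real p + 2)" using kb by (intro mult_right_mono) auto
    then show ?thesis unfolding Kb_def K by (simp add: algebra_simps)
  qed
  have CCb: "C \<le> Cb" unfolding C_def Cb_def
    using kb Sb S0 by (intro add_left_mono mult_mono) auto
  have T: "(2 * S + 2 * real K * \<eta>\<^sup>2) / (2 * s2) \<le> S / s2 + Kb * r0\<^sup>2 / s2"
  proof -
    have "\<eta>\<^sup>2 \<le> r0\<^sup>2" using eta0 etar by (simp add: power_mono)
    then have "real K * \<eta>\<^sup>2 \<le> Kb * r0\<^sup>2" using KKb by (intro mult_mono) auto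
    then show ?thesis using s2 by (simp add: add_divide_distrib divide_right_mono)
  qed
  have l: "ln (sqrt (2 * pi * s2) / (2 * \<eta>)) = ln (sqrt (2 * pi * s2)) - ln (2 * r0) + \<delta> / 2 * ln (real n) + ln C"
    unfolding \<eta>_def using r0 C1 np npw0 s2
    by (simp add: ln_div ln_mult ln_powr)
  define L where "L = \<bar>ln (sqrt (2 * pi * s2))\<bar> + \<bar>ln (2 * r0)\<bar> + \<delta> / 2 * ln (real n) + ln Cb"
  have L0: "L \<ge> 0" unfolding L_def using n d C1 CCb by (intro add_nonneg_nonneg mult_nonneg_nonneg) auto
  have lL: "ln (sqrt (2 * pi * s2) / (2 * \<eta>)) \<le> L" 
  proof -
    have "ln C \<le> ln Cb" using C1 CCb by simp
    then show ?thesis unfolding l L_def by linarith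
  qed
  have "real K * ln (sqrt (2 * pi * s2) / (2 * \<eta>)) \<le> real K * L" using lL by (intro mult_left_mono) auto
  also have "\<dots> \<le> Kb * L" using KKb L0 by (intro mult_right_mono) auto
  finally show ?thesis using T unfolding L_def Kb_def Cb_def by linarith
qed


lemma core:
  fixes \<theta> :: "nat \<Rightarrow> real" and n k p :: nat
  assumes f0_meas: "f0 \<in> borel_measurable (cube p)"
    and f0_sq: "integrable (cube p) (\<lambda>x. (f0 x)\<^sup>2)"
    and sigma0: "\<sigma>0 > 0" and kappa: "\<kappa> > 0" and n: "n \<ge> 1" and s2: "s2 > 0"
    and L: "L2sq p (fnet p k \<theta>) f0 < \<kappa> * \<sigma>0\<^sup>2 / 4 * real n powr (- \<delta>)"
  defines "S \<equiv> (\<Sum>i<nparams p k. (\<theta> i)\<^sup>2)"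
  defines "C \<equiv> 1 + real k * (1 + (1 + S) * (real p + 1))"
  defines "\<eta> \<equiv> sqrt (\<kappa> * \<sigma>0\<^sup>2 / 4) * real n powr (- \<delta> / 2) / C"
  assumes X: "(2 * S + 2 * real (nparams p k) * \<eta>\<^sup>2) / (2 * s2)
            + real (nparams p k) * ln (sqrt (2 * pi * s2) / (2 * \<eta>)) \<le> X"
  shows "ennreal (exp (- X)) \<le> prior_mass s2 (nparams p k) (Nbhd p k \<sigma>0 f0 (\<kappa> / real n powr \<delta>))"
proof (rule mass_lower[OF f0_meas f0_sq sigma0 s2])
  have S0: "S \<ge> 0" unfolding S_def by (intro sum_nonneg) auto
  have C1: "C \<ge> 1" unfolding C_def using S0 by (simp add: add_nonneg_nonneg)
  have np: "real n > 0" using n by simp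
  define r0 where "r0 = sqrt (\<kappa> * \<sigma>0\<^sup>2 / 4)"
  have r0: "r0 > 0" unfolding r0_def using kappa sigma0 by simp
  show "\<eta> > 0" unfolding \<eta>_def r0_def[symmetric] using r0 np C1 by simp
  have "\<eta> * C = r0 * real n powr (- \<delta> / 2)" unfolding \<eta>_def r0_def[symmetric] using C1 by simp
  then have "(\<eta> * C)\<^sup>2 = r0\<^sup>2 * (real n powr (- \<delta> / 2))\<^sup>2" by (simp add: power_mult_distrib)
  also have "(real n powr (- \<delta> / 2))\<^sup>2 = real n powr (- \<delta>)"
    using np by (simp add: powr_powr[symmetric] power2_eq_square powr_add[symmetric])
  also have "r0\<^sup>2 = \<kappa> * \<sigma>0\<^sup>2 / 4" unfolding r0_def using kappa sigma0 by simp
  finally have eC: "(\<eta> * C)\<^sup>2 = \<kappa> * \<sigma>0\<^sup>2 / 4 * real n powr (- \<delta>)" .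
  have "\<kappa> / real n powr \<delta> * \<sigma>0\<^sup>2 = \<kappa> * \<sigma>0\<^sup>2 * real n powr (- \<delta>)"
    using np by (simp add: powr_minus divide_inverse)
  then show "2 * (\<eta> * (1 + real k * (1 + (1 + (\<Sum>i<nparams p k. (\<theta> i)\<^sup>2)) * (real p + 1))))\<^sup>2
                + 2 * L2sq p (fnet p k \<theta>) f0 < \<kappa> / real n powr \<delta> * \<sigma>0\<^sup>2"
    using eC L unfolding C_def S_def by simp
  show "(2 * (\<Sum>i<nparams p k. (\<theta> i)\<^sup>2) + 2 * real (nparams p k) * \<eta>\<^sup>2) / (2 * s2)
            + real (nparams p k) * ln (sqrt (2 * pi * s2) / (2 * \<eta>)) \<le> X"
    using X unfolding S_def .
qed

lemma U1_small:
  fixes a d A c1 r z :: real and p :: nat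
  assumes "0 < a" "a < 1 - d" "0 \<le> d" "c1 > 0" "z > 0"
  shows "(\<lambda>n::nat. (1 + c1 * real n powr a * (real p + 2)) * r / z + (1 + c1 * real n powr a * (real p + 2)) *
     (A + d / 2 * ln (real n) + ln (1 + c1 * real n powr a * (1 + (1 + real n) * (real p + 1))))) \<in> o(\<lambda>n. real n powr (1 - d))"
proof -
  define P where "P = real p"
  have "P \<ge> 0" unfolding P_def by simp
  then have "(\<lambda>n::nat. (1 + c1 * real n powr a * (P + 2)) * r / z + (1 + c1 * real n powr a * (P + 2)) *
     (A + d / 2 * ln (real n) + ln (1 + c1 * real n powr a * (1 + (1 + real n) * (P + 1))))) \<in> o(\<lambda>n. real n powr (1 - d))"
    using assms by real_asymp
  then show ?thesis unfolding P_def .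
qed

lemma U2_small:
  fixes a d A c1 r z u v B :: real and p :: nat
  assumes "0 < a" "a < 1 - d" "0 \<le> d" "c1 > 0" "z > 0" "v > 1" "u > v" "B > 0"
  shows "(\<lambda>n::nat. B * real n powr v / (z * real n powr u) + (1 + c1 * real n powr a * (real p + 2)) * r / (z * real n powr u) + (1 + c1 * real n powr a * (real p + 2)) *
     (A + u / 2 * ln (real n) + d / 2 * ln (real n) + ln (1 + c1 * real n powr a * (1 + (1 + B * real n powr v) * (real p + 1))))) \<in> o(\<lambda>n. real n powr (1 - d))"
proof -
  define P where "P = real p"
  have "P \<ge> 0" unfolding P_def by simp
  then have "(\<lambda>n::nat. B * real n powr v / (z * real n powr u) + (1 + c1 * real n powr a * (P + 2)) * r / (z * real n powr u) + (1 + c1 * real n powr a * (P + 2)) *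
     (A + u / 2 * ln (real n) + d / 2 * ln (real n) + ln (1 + c1 * real n powr a * (1 + (1 + B * real n powr v) * (P + 1))))) \<in> o(\<lambda>n. real n powr (1 - d))"
    using assms by real_asymp
  then show ?thesis unfolding P_def .
qed


lemma core2:
  fixes \<theta> :: "nat \<Rightarrow> real" and n k p :: nat
  assumes f0_meas: "f0 \<in> borel_measurable (cube p)"
    and f0_sq: "integrable (cube p) (\<lambda>x. (f0 x)\<^sup>2)"
    and sigma0: "\<sigma>0 > 0" and kappa: "\<kappa> > 0" and n: "n \<ge> 1" and s2: "s2 > 0" and d: "\<delta> \<ge> 0"
    and L: "L2sq p (fnet p k \<theta>) f0 < \<kappa> * \<sigma>0\<^sup>2 / 4 * real n powr (- \<delta>)"
    and kb: "real k \<le> c1 * real n powr a"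
    and Sb: "(\<Sum>i<nparams p k. (\<theta> i)\<^sup>2) \<le> Sb"
    and bound: "(\<Sum>i<nparams p k. (\<theta> i)\<^sup>2) / s2 + (1 + c1 * real n powr a * (real p + 2)) * (sqrt (\<kappa> * \<sigma>0\<^sup>2 / 4))\<^sup>2 / s2
        + (1 + c1 * real n powr a * (real p + 2)) *
          (\<bar>ln (sqrt (2 * pi * s2))\<bar> + \<bar>ln (2 * sqrt (\<kappa> * \<sigma>0\<^sup>2 / 4))\<bar> + \<delta> / 2 * ln (real n)
           + ln (1 + c1 * real n powr a * (1 + (1 + Sb) * (real p + 1)))) \<le> X"
  shows "ennreal (exp (- X)) \<le> prior_mass s2 (nparams p k) (Nbhd p k \<sigma>0 f0 (\<kappa> / real n powr \<delta>))"
proof (rule core[OF f0_meas f0_sq sigma0 kappa n s2 L])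
  have S0: "(\<Sum>i<nparams p k. (\<theta> i)\<^sup>2) \<ge> 0" by (intro sum_nonneg) auto
  have r0: "sqrt (\<kappa> * \<sigma>0\<^sup>2 / 4) > 0" using kappa sigma0 by simp
  show "(2 * (\<Sum>i<nparams p k. (\<theta> i)\<^sup>2) + 2 * real (nparams p k) *
       (sqrt (\<kappa> * \<sigma>0\<^sup>2 / 4) * real n powr (- \<delta> / 2) / (1 + real k * (1 + (1 + (\<Sum>i<nparams p k. (\<theta> i)\<^sup>2)) * (real p + 1))))\<^sup>2) / (2 * s2) +
    real (nparams p k) *
    ln (sqrt (2 * pi * s2) /
        (2 * (sqrt (\<kappa> * \<sigma>0\<^sup>2 / 4) * real n powr (- \<delta> / 2) / (1 + real k * (1 + (1 + (\<Sum>i<nparams p k. (\<theta> i)\<^sup>2)) * (real p + 1))))))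
    \<le> X"
    by (rule order_trans[OF lhs_bound bound]) (use n s2 r0 d kb S0 Sb in \<open>auto simp: nparams_def\<close>)
qed

theorem proposition2:
  fixes p :: nat and \<sigma>0 \<zeta> a \<delta> :: real
    and f0 :: "(nat \<Rightarrow> real) \<Rightarrow> real"
    and k :: "nat \<Rightarrow> nat"
    and \<theta>0 :: "nat \<Rightarrow> nat \<Rightarrow> real"
  assumes p_pos: "p > 0"
    and sigma0: "\<sigma>0 > 0" and zeta: "\<zeta> > 0"
    and f0_meas: "f0 \<in> borel_measurable (cube p)"
    and f0_sq: "integrable (cube p) (\<lambda>x. (f0 x)\<^sup>2)"
    and a: "0 < a" "a < 1"
    and kn: "(\<lambda>n. real (k n)) \<sim>[at_top] (\<lambda>n. real n powr a)"
    and delta: "0 \<le> \<delta>" "\<delta> < 1 - a"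
    and A1: "(\<lambda>n. L2dist p (fnet p (k n) (\<theta>0 n)) f0) \<in> o(\<lambda>n. real n powr (- \<delta>))"
  shows "\<forall>\<kappa> \<kappa>'. \<kappa> > 0 \<and> \<kappa>' > 0 \<longrightarrow>
     (((\<lambda>n. \<Sum>i<nparams p (k n). (\<theta>0 n i)\<^sup>2) \<in> o(\<lambda>n. real n powr (1 - \<delta>)) \<longrightarrow>
        (\<forall>\<^sub>F n in at_top.
           ennreal (exp (- \<kappa>' * real n powr (1 - \<delta>)))
           \<le> prior_mass (\<zeta>\<^sup>2) (nparams p (k n))
                (Nbhd p (k n) \<sigma>0 f0 (\<kappa> / real n powr \<delta>))))
      \<and>
      (\<forall>v u. v > 1 \<and> u > v \<and>
        (\<lambda>n. \<Sum>i<nparams p (k n). (\<theta>0 n i)\<^sup>2) \<in> O(\<lambda>n. real n powr v) \<longrightarrow>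
        (\<forall>\<^sub>F n in at_top.
           ennreal (exp (- \<kappa>' * real n powr (1 - \<delta>)))
           \<le> prior_mass (\<zeta>\<^sup>2 * real n powr u) (nparams p (k n))
                (Nbhd p (k n) \<sigma>0 f0 (\<kappa> / real n powr \<delta>)))))"
proof (intro allI impI conjI)
  fix \<kappa> \<kappa>' :: real
  assume kk: "\<kappa> > 0 \<and> \<kappa>' > 0"
  then have kappa: "\<kappa> > 0" and kappa': "\<kappa>' > 0" by auto
  define r0 where "r0 = sqrt (\<kappa> * \<sigma>0\<^sup>2 / 4)"
  have r0: "r0 > 0" unfolding r0_def using kappa sigma0 by simp
  have En: "\<forall>\<^sub>F n in at_top. (n::nat) \<ge> 1" by (rule eventually_ge_at_top)
  obtain c1 where c1: "c1 > 0" and Ek: "\<forall>\<^sub>F n in at_top. real (k n) \<le> c1 * real n powr a"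
  proof -
    from asymp_equiv_imp_bigo[OF kn] obtain c where c: "c > 0"
      "\<forall>\<^sub>F n in at_top. norm (real (k n)) \<le> c * norm (real n powr a)"
      by (elim landau_o.bigE)
    from c(2) have "\<forall>\<^sub>F n in at_top. real (k n) \<le> c * real n powr a"
      by (rule eventually_mono) simp
    then show thesis using c(1) by (intro that[of c])
  qed
  have EL: "\<forall>\<^sub>F n in at_top. L2sq p (fnet p (k n) (\<theta>0 n)) f0 < \<kappa> * \<sigma>0\<^sup>2 / 4 * real n powr (- \<delta>)"
  proof -
    define c where "c = sqrt (\<kappa> * \<sigma>0\<^sup>2 / 8)"
    have c: "c > 0" unfolding c_def using kappa sigma0 by simp
    have "\<forall>\<^sub>F n in at_top. norm (L2dist p (fnet p (k n) (\<theta>0 n)) f0) \<le> c * norm (real n powr (- \<delta>))"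
      by (rule landau_o.smallD[OF A1 c])
    with En show ?thesis
    proof eventually_elim
      case (elim n)
      define Lq where "Lq = L2sq p (fnet p (k n) (\<theta>0 n)) f0"
      have Lq0: "Lq \<ge> 0" unfolding Lq_def L2sq_def by (rule integral_nonneg_AE) simp
      have np: "real n > 0" using elim by simp
      have "sqrt Lq \<le> c * real n powr (- \<delta>)" using elim(2) unfolding Lq_def L2dist_def by simp
      then have "(sqrt Lq)\<^sup>2 \<le> (c * real n powr (- \<delta>))\<^sup>2" using Lq0 by (intro power_mono) auto
      then have "Lq \<le> c\<^sup>2 * (real n powr (- \<delta>))\<^sup>2" using Lq0 by (simp add: power_mult_distrib)
      also have "c\<^sup>2 = \<kappa> * \<sigma>0\<^sup>2 / 8" unfolding c_def using kappa sigma0 by simp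
      also have "(real n powr (- \<delta>))\<^sup>2 \<le> real n powr (- \<delta>)"
      proof -
        have "(real n powr (- \<delta>))\<^sup>2 = real n powr (- \<delta>) * real n powr (- \<delta>)" by (simp add: power2_eq_square)
        also have "\<dots> \<le> real n powr (- \<delta>) * 1"
        proof (intro mult_left_mono)
          have "real n powr (- \<delta>) \<le> real n powr 0" by (rule powr_mono) (use elim delta in auto)
          then show "real n powr (- \<delta>) \<le> 1" using np by simp
        qed simp
        finally show ?thesis by simp
      qed
      then have "\<kappa> * \<sigma>0\<^sup>2 / 8 * (real n powr (- \<delta>))\<^sup>2 \<le> \<kappa> * \<sigma>0\<^sup>2 / 8 * real n powr (- \<delta>)"
        using kappa by (intro mult_left_mono) auto
      also have "\<dots> < \<kappa> * \<sigma>0\<^sup>2 / 4 * real n powr (- \<delta>)"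
        using kappa sigma0 np by (intro mult_strict_right_mono) auto
      finally show ?case unfolding Lq_def .
    qed
  qed
  have npos: "real n powr (1 - \<delta>) \<ge> 0" for n :: nat by simp
  {
    assume A2: "(\<lambda>n. \<Sum>i<nparams p (k n). (\<theta>0 n i)\<^sup>2) \<in> o(\<lambda>n. real n powr (1 - \<delta>))"
    have z2: "\<zeta>\<^sup>2 > 0" using zeta by simp
    have ES1: "\<forall>\<^sub>F n in at_top. norm (\<Sum>i<nparams p (k n). (\<theta>0 n i)\<^sup>2) \<le> (\<kappa>' * \<zeta>\<^sup>2 / 2) * norm (real n powr (1 - \<delta>))"
      by (rule landau_o.smallD[OF A2]) (use kappa' z2 in simp)
    have ES2: "\<forall>\<^sub>F n in at_top. norm (\<Sum>i<nparams p (k n). (\<theta>0 n i)\<^sup>2) \<le> 1 * norm (real n powr (1 - \<delta>))"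
      by (rule landau_o.smallD[OF A2]) simp
    have EU: "\<forall>\<^sub>F n in at_top. norm ((1 + c1 * real n powr a * (real p + 2)) * r0\<^sup>2 / \<zeta>\<^sup>2 + (1 + c1 * real n powr a * (real p + 2)) *
     ((\<bar>ln (sqrt (2 * pi * \<zeta>\<^sup>2))\<bar> + \<bar>ln (2 * r0)\<bar>) + \<delta> / 2 * ln (real n) + ln (1 + c1 * real n powr a * (1 + (1 + real n) * (real p + 1)))))
      \<le> (\<kappa>' / 2) * norm (real n powr (1 - \<delta>))"
      by (rule landau_o.smallD[OF U1_small]) (use a delta c1 z2 kappa' in auto)
    show "\<forall>\<^sub>F n in at_top.
           ennreal (exp (- \<kappa>' * real n powr (1 - \<delta>)))
           \<le> prior_mass (\<zeta>\<^sup>2) (nparams p (k n))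
                (Nbhd p (k n) \<sigma>0 f0 (\<kappa> / real n powr \<delta>))"
      using En Ek EL ES1 ES2 EU
    proof eventually_elim
      case (elim n)
      define S where "S = (\<Sum>i<nparams p (k n). (\<theta>0 n i)\<^sup>2)"
      have S0: "S \<ge> 0" unfolding S_def by (intro sum_nonneg) auto
      have np: "real n > 0" using elim by simp
      have "S \<le> real n powr (1 - \<delta>)" using elim(5) S0 unfolding S_def by simp
      also have "\<dots> \<le> real n powr 1" by (rule powr_mono) (use elim delta in auto)
      finally have Sn: "S \<le> real n" using np by simp
      have S1: "S / \<zeta>\<^sup>2 \<le> \<kappa>' / 2 * real n powr (1 - \<delta>)"
        using elim(4) S0 z2 unfolding S_def[symmetric] by (simp add: divide_le_eq algebra_simps)
      have U: "(1 + c1 * real n powr a * (real p + 2)) * r0\<^sup>2 / \<zeta>\<^sup>2 + (1 + c1 * real n powr a * (real p + 2)) *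
          ((\<bar>ln (sqrt (2 * pi * \<zeta>\<^sup>2))\<bar> + \<bar>ln (2 * r0)\<bar>) + \<delta> / 2 * ln (real n) + ln (1 + c1 * real n powr a * (1 + (1 + real n) * (real p + 1))))
          \<le> \<kappa>' / 2 * real n powr (1 - \<delta>)"
        using elim(6) unfolding real_norm_def abs_of_nonneg[OF npos] by (rule order_trans[OF abs_ge_self])
      have "ennreal (exp (- (\<kappa>' * real n powr (1 - \<delta>))))
           \<le> prior_mass (\<zeta>\<^sup>2) (nparams p (k n)) (Nbhd p (k n) \<sigma>0 f0 (\<kappa> / real n powr \<delta>))"
      proof (rule core2[OF f0_meas f0_sq sigma0 kappa elim(1) z2 delta(1) elim(3) elim(2)])
        show "(\<Sum>i<nparams p (k n). (\<theta>0 n i)\<^sup>2) \<le> real n" using Sn unfolding S_def .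
        show "(\<Sum>i<nparams p (k n). (\<theta>0 n i)\<^sup>2) / \<zeta>\<^sup>2 +
          (1 + c1 * real n powr a * (real p + 2)) * (sqrt (\<kappa> * \<sigma>0\<^sup>2 / 4))\<^sup>2 / \<zeta>\<^sup>2 +
          (1 + c1 * real n powr a * (real p + 2)) *
          (\<bar>ln (sqrt (2 * pi * \<zeta>\<^sup>2))\<bar> + \<bar>ln (2 * sqrt (\<kappa> * \<sigma>0\<^sup>2 / 4))\<bar> + \<delta> / 2 * ln (real n) +
           ln (1 + c1 * real n powr a * (1 + (1 + real n) * (real p + 1))))
          \<le> \<kappa>' * real n powr (1 - \<delta>)"
          using S1 U unfolding S_def r0_def by linarith
      qed
      then show ?case by simp
    qed
  }
  {
    fix v u :: real
    assume vu: "v > 1 \<and> u > v \<and> (\<lambda>n. \<Sum>i<nparams p (k n). (\<theta>0 n i)\<^sup>2) \<in> O(\<lambda>n. real n powr v)"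
    then have v: "v > 1" and u: "u > v" and A3: "(\<lambda>n. \<Sum>i<nparams p (k n). (\<theta>0 n i)\<^sup>2) \<in> O(\<lambda>n. real n powr v)"
      by auto
    have z2: "\<zeta>\<^sup>2 > 0" using zeta by simp
    obtain B where B: "B > 0" and EB: "\<forall>\<^sub>F n in at_top. norm (\<Sum>i<nparams p (k n). (\<theta>0 n i)\<^sup>2) \<le> B * norm (real n powr v)"
      using A3 by (elim landau_o.bigE) blast
    have EU: "\<forall>\<^sub>F n in at_top. norm (B * real n powr v / (\<zeta>\<^sup>2 * real n powr u) + (1 + c1 * real n powr a * (real p + 2)) * r0\<^sup>2 / (\<zeta>\<^sup>2 * real n powr u) + (1 + c1 * real n powr a * (real p + 2)) *
     ((\<bar>ln (sqrt (2 * pi * \<zeta>\<^sup>2))\<bar> + \<bar>ln (2 * r0)\<bar>) + u / 2 * ln (real n) + \<delta> / 2 * ln (real n) + ln (1 + c1 * real n powr a * (1 + (1 + B * real n powr v) * (real p + 1)))))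
      \<le> \<kappa>' * norm (real n powr (1 - \<delta>))"
      by (rule landau_o.smallD[OF U2_small]) (use a delta c1 z2 kappa' v u B in auto)
    show "\<forall>\<^sub>F n in at_top.
           ennreal (exp (- \<kappa>' * real n powr (1 - \<delta>)))
           \<le> prior_mass (\<zeta>\<^sup>2 * real n powr u) (nparams p (k n))
                (Nbhd p (k n) \<sigma>0 f0 (\<kappa> / real n powr \<delta>))"
      using En Ek EL EB EU
    proof eventually_elim
      case (elim n)
      define S where "S = (\<Sum>i<nparams p (k n). (\<theta>0 n i)\<^sup>2)"
      have S0: "S \<ge> 0" unfolding S_def by (intro sum_nonneg) auto
      have np: "real n > 0" using elim by simp
      have lnn: "ln (real n) \<ge> 0" using elim by simp
      have nu: "real n powr u > 0" using np by simp
      have s2: "\<zeta>\<^sup>2 * real n powr u > 0" using z2 nu by simp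
      have SB: "S \<le> B * real n powr v" using elim(4) S0 unfolding S_def by simp
      have S1: "S / (\<zeta>\<^sup>2 * real n powr u) \<le> B * real n powr v / (\<zeta>\<^sup>2 * real n powr u)"
        using SB s2 by (intro divide_right_mono) auto
      have lnsq: "\<bar>ln (sqrt (2 * pi * (\<zeta>\<^sup>2 * real n powr u)))\<bar> \<le> \<bar>ln (sqrt (2 * pi * \<zeta>\<^sup>2))\<bar> + u / 2 * ln (real n)"
      proof -
        have "ln (sqrt (2 * pi * (\<zeta>\<^sup>2 * real n powr u))) = ln (sqrt (2 * pi * \<zeta>\<^sup>2)) + u / 2 * ln (real n)"
          using z2 np by (simp add: ln_sqrt ln_mult ln_powr field_simps)
        moreover have "u / 2 * ln (real n) \<ge> 0" using u v lnn by simp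
        ultimately show ?thesis by linarith
      qed
      define Kb where "Kb = 1 + c1 * real n powr a * (real p + 2)"
      have Kb: "Kb \<ge> 0" unfolding Kb_def using c1 by simp
      have U: "B * real n powr v / (\<zeta>\<^sup>2 * real n powr u) + Kb * r0\<^sup>2 / (\<zeta>\<^sup>2 * real n powr u) + Kb *
          ((\<bar>ln (sqrt (2 * pi * \<zeta>\<^sup>2))\<bar> + \<bar>ln (2 * r0)\<bar>) + u / 2 * ln (real n) + \<delta> / 2 * ln (real n) + ln (1 + c1 * real n powr a * (1 + (1 + B * real n powr v) * (real p + 1))))
          \<le> \<kappa>' * real n powr (1 - \<delta>)"
        using elim(5) unfolding Kb_def real_norm_def abs_of_nonneg[OF npos] by (rule order_trans[OF abs_ge_self])
      have "ennreal (exp (- (\<kappa>' * real n powr (1 - \<delta>))))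
           \<le> prior_mass (\<zeta>\<^sup>2 * real n powr u) (nparams p (k n)) (Nbhd p (k n) \<sigma>0 f0 (\<kappa> / real n powr \<delta>))"
      proof (rule core2[OF f0_meas f0_sq sigma0 kappa elim(1) s2 delta(1) elim(3) elim(2)])
        show "(\<Sum>i<nparams p (k n). (\<theta>0 n i)\<^sup>2) \<le> B * real n powr v" using SB unfolding S_def .
        have G1: "Kb * (\<bar>ln (sqrt (2 * pi * (\<zeta>\<^sup>2 * real n powr u)))\<bar> + \<bar>ln (2 * r0)\<bar> + \<delta> / 2 * ln (real n) +
           ln (1 + c1 * real n powr a * (1 + (1 + B * real n powr v) * (real p + 1))))
          \<le> Kb * ((\<bar>ln (sqrt (2 * pi * \<zeta>\<^sup>2))\<bar> + \<bar>ln (2 * r0)\<bar>) + u / 2 * ln (real n) + \<delta> / 2 * ln (real n) + ln (1 + c1 * real n powr a * (1 + (1 + B * real n powr v) * (real p + 1))))"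
          by (intro mult_left_mono) (use lnsq Kb in linarith)+
        then show "(\<Sum>i<nparams p (k n). (\<theta>0 n i)\<^sup>2) / (\<zeta>\<^sup>2 * real n powr u) +
          (1 + c1 * real n powr a * (real p + 2)) * (sqrt (\<kappa> * \<sigma>0\<^sup>2 / 4))\<^sup>2 / (\<zeta>\<^sup>2 * real n powr u) +
          (1 + c1 * real n powr a * (real p + 2)) *
          (\<bar>ln (sqrt (2 * pi * (\<zeta>\<^sup>2 * real n powr u)))\<bar> + \<bar>ln (2 * sqrt (\<kappa> * \<sigma>0\<^sup>2 / 4))\<bar> + \<delta> / 2 * ln (real n) +
           ln (1 + c1 * real n powr a * (1 + (1 + B * real n powr v) * (real p + 1))))
          \<le> \<kappa>' * real n powr (1 - \<delta>)"
          using S1 U unfolding S_def r0_def Kb_def by linarith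
      qed
      then show ?case by simp
    qed
  }
qed

end
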